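(* Let $q$ be a prime power, $L$ an integer with $1\le L<q$, and $r\in[0,\frac{L}{L+1})$ with $rn\in\mathbb{N}$. If $C\subseteq\mathbb{F}_q^n$ is a linear $(r,L)$ list-decodable code, then $d(C)>rn+\lfloor\frac{rn}{L}\rfloor$.
   Context: A linear code is a subspace of $\mathbb{F}_q^n$; $d(C)$ is its minimum Hamming distance between distinct codewords. $C$ is $(r,L)$ list-decodable if every Hamming ball of radius $rn$ in $\mathbb{F}_q^n$ contains at most $L$ codewords. *)

theory Defs
  imports "HOL-Analysis.Analysis" "HOL-Library.Extended_Nat"
begin

text \<open>Vectors of F_q^n are elements of type 'a ^ 'n, with 'a a finite field (q = CARD('a))
  and n = CARD('n).\<close>

definition hamming_dist :: "'a ^ 'n \<Rightarrow> 'a ^ 'n \<Rightarrow> nat" where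
  "hamming_dist x y = card {i. x $ i \<noteq> y $ i}"

definition linear_code :: "('a::field ^ 'n) set \<Rightarrow> bool" where
  "linear_code C \<longleftrightarrow> vec.subspace C"

text \<open>Minimum distance (infinity if C has fewer than two codewords).\<close>
definition min_dist :: "('a ^ 'n) set \<Rightarrow> enat" where
  "min_dist C = (INF p \<in> {(x, y). x \<in> C \<and> y \<in> C \<and> x \<noteq> y}. enat (hamming_dist (fst p) (snd p)))"

definition list_decodable :: "real \<Rightarrow> nat \<Rightarrow> ('a ^ 'n) set \<Rightarrow> bool" where
  "list_decodable r L C \<longleftrightarrow>
     (\<forall>y. card {c \<in> C. real (hamming_dist c y) \<le> r * real CARD('n)} \<le> L)"

end

theory Submission
  imports Defs
begin

lemma count_bound:
  fixes w t L j :: nat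
  assumes "L*w \<le> (L+1)*t" "j \<le> L"
  shows "card {k\<in>{0..<w}. (if w \<le> t then 0 else min L (k div (w-t))) \<noteq> j} \<le> t"
proof (cases "w \<le> t")
  case True
  have "card {k\<in>{0..<w}. (if w \<le> t then 0 else min L (k div (w-t))) \<noteq> j} \<le> card {0..<w}"
    by (rule card_mono) auto
  then show ?thesis using True by simp
next
  case False
  define m where "m = w - t"
  have m0: "m > 0" using False m_def by simp
  have Lm: "(L+1)*m \<le> w" using assms(1) False unfolding m_def
    by (simp add: algebra_simps diff_mult_distrib2)
  have jm: "j*m + m \<le> w"
  proof -
    have "j*m \<le> L*m" using assms(2) by (rule mult_le_mono1)
    then show ?thesis using Lm by (simp only: algebra_simps)
  qed
  have sub: "{k\<in>{0..<w}. (if w \<le> t then 0 else min L (k div (w-t))) \<noteq> j} \<subseteq> {0..<w} - {j*m..<j*m+m}"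
  proof
    fix k assume k: "k \<in> {k\<in>{0..<w}. (if w \<le> t then 0 else min L (k div (w-t))) \<noteq> j}"
    show "k \<in> {0..<w} - {j*m..<j*m+m}"
    proof
      show "k \<in> {0..<w}" using k by simp
      show "k \<notin> {j*m..<j*m+m}"
      proof
        assume "k \<in> {j*m..<j*m+m}"
        then have "k div m = j" using m0
          by (metis atLeastLessThan_iff div_nat_eqI mult.commute mult_Suc_right add.commute)
        then show False using k False assms(2) unfolding m_def by auto
      qed
    qed
  qed
  have "card ({0..<w} - {j*m..<j*m+m}) = w - m"
    using jm by (subst card_Diff_subset) auto
  then have "card ({0..<w} - {j*m..<j*m+m}) = t" using False m_def by simp
  then show ?thesis using card_mono[OF _ sub] by simp
qed

lemma core:
  fixes c :: "'a::{finite,field} ^ 'n" and t L :: nat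
  assumes cC: "c \<in> C" and c0: "c \<noteq> 0" and sub: "vec.subspace C" and Lq: "L+1 \<le> CARD('a)"
    and wt: "L * card {i. c$i \<noteq> 0} \<le> (L+1)*t"
  shows "\<exists>y. L+1 \<le> card {x\<in>C. hamming_dist x y \<le> t}"
proof -
  define S where "S = {i. c$i \<noteq> 0}"
  define w where "w = card S"
  obtain lam :: "nat \<Rightarrow> 'a" where lam: "bij_betw lam {0..<CARD('a)} UNIV"
    using ex_bij_betw_nat_finite[of "UNIV :: 'a set"] by auto
  have ilam: "inj_on lam {0..L}"
  proof (rule inj_on_subset[OF bij_betw_imp_inj_on[OF lam]])
    show "{0..L} \<subseteq> {0..<CARD('a)}" using Lq by auto
  qed
  obtain f where f: "bij_betw f S {0..<w}"
    using ex_bij_betw_finite_nat[of S] unfolding w_def by auto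
  define G where "G k = (if w \<le> t then 0 else min L (k div (w-t)))" for k
  have GL: "G k \<le> L" for k unfolding G_def by auto
  define y where "y = (\<chi> i. if c$i = 0 then 0 else lam (G (f i)) * c$i)"
  have dist: "hamming_dist (lam j *s c) y \<le> t" if j: "j \<le> L" for j
  proof -
    have eq1: "{i. (lam j *s c)$i \<noteq> y$i} = {i\<in>S. G (f i) \<noteq> j}"
    proof (intro set_eqI iffI)
      fix i assume "i \<in> {i. (lam j *s c)$i \<noteq> y$i}"
      then have ne: "lam j * c$i \<noteq> y$i" by simp
      then have ci: "c$i \<noteq> 0" unfolding y_def by auto
      then have "lam j \<noteq> lam (G (f i))" using ne unfolding y_def by auto
      then show "i \<in> {i\<in>S. G (f i) \<noteq> j}" using ci S_def by auto
    next
      fix i assume "i \<in> {i\<in>S. G (f i) \<noteq> j}"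
      then have ci: "c$i \<noteq> 0" and gj: "G (f i) \<noteq> j" using S_def by auto
      have "lam j \<noteq> lam (G (f i))"
        using inj_onD[OF ilam, of j "G (f i)"] gj GL j by auto
      then show "i \<in> {i. (lam j *s c)$i \<noteq> y$i}" using ci unfolding y_def by auto
    qed
    have inj: "inj_on f {i\<in>S. G (f i) \<noteq> j}"
      using bij_betw_imp_inj_on[OF f] by (rule inj_on_subset) auto
    have img: "f ` {i\<in>S. G (f i) \<noteq> j} = {k\<in>{0..<w}. G k \<noteq> j}"
      using bij_betw_imp_surj_on[OF f] by auto
    have "hamming_dist (lam j *s c) y = card {k\<in>{0..<w}. G k \<noteq> j}"
      unfolding hamming_dist_def eq1 using card_image[OF inj] img by simp
    also have "\<dots> \<le> t" unfolding G_def
      by (rule count_bound[OF _ j]) (use wt in \<open>simp add: w_def S_def\<close>)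
    finally show ?thesis .
  qed
  obtain i0 where i0: "c$i0 \<noteq> 0" using c0 by (metis vec_eq_iff zero_index)
  have injs: "inj_on (\<lambda>j. lam j *s c) {0..L}"
  proof
    fix a b assume a: "a \<in> {0..L}" and b: "b \<in> {0..L}" and e: "lam a *s c = lam b *s c"
    then have "lam a * c$i0 = lam b * c$i0" by (metis vector_scalar_mult_def vec_lambda_beta)
    then have "lam a = lam b" using i0 by simp
    then show "a = b" using inj_onD[OF ilam] a b by auto
  qed
  have "(\<lambda>j. lam j *s c) ` {0..L} \<subseteq> {x\<in>C. hamming_dist x y \<le> t}"
    using dist vec.subspace_scale[OF sub cC] by auto
  then have "card ((\<lambda>j. lam j *s c) ` {0..L}) \<le> card {x\<in>C. hamming_dist x y \<le> t}"
    by (rule card_mono[rotated]) simp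
  then show ?thesis using card_image[OF injs] by auto
qed

theorem proposition6p4:
  fixes C :: "('a::{finite,field} ^ 'n) set" and q L :: nat and r :: real
  assumes "CARD('a) = q"
    and "1 \<le> L" and "L < q"
    and "0 \<le> r" and "r < real L / (real L + 1)"
    and "r * real CARD('n) \<in> \<nat>"
    and "linear_code C"
    and "list_decodable r L C"
  shows "min_dist C > enat (nat \<lfloor>r * real CARD('n)\<rfloor> + nat \<lfloor>r * real CARD('n) / real L\<rfloor>)"
proof -
  obtain t :: nat where t: "r * real CARD('n) = real t" using assms(6) by (auto elim: Nats_cases)
  have N: "nat \<lfloor>r * real CARD('n)\<rfloor> + nat \<lfloor>r * real CARD('n) / real L\<rfloor> = t + t div L"
  proof -
    have "\<lfloor>real t / real L\<rfloor> = int (t div L)" using floor_divide_of_nat_eq[of t L] by simp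
    then show ?thesis using t by simp
  qed
  have sub: "vec.subspace C" using assms(7) linear_code_def by blast
  show ?thesis unfolding N
  proof (rule ccontr)
    assume "\<not> enat (t + t div L) < min_dist C"
    then have ex: "\<exists>x y. x \<in> C \<and> y \<in> C \<and> x \<noteq> y \<and> hamming_dist x y \<le> t + t div L"
    proof (rule contrapos_np)
      assume "\<not> (\<exists>x y. x \<in> C \<and> y \<in> C \<and> x \<noteq> y \<and> hamming_dist x y \<le> t + t div L)"
      then have "enat (Suc (t + t div L)) \<le> min_dist C"
        unfolding min_dist_def by (force intro!: INF_greatest simp: not_le)
      then show "enat (t + t div L) < min_dist C"
        by (metis Suc_ile_eq order_less_le_trans order_refl enat_ord_simps(2) lessI le_less_trans)
    qed
    then obtain x y where xy: "x \<in> C" "y \<in> C" "x \<noteq> y" "hamming_dist x y \<le> t + t div L" by blast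
    define c where "c = x - y"
    have cC: "c \<in> C" using vec.subspace_diff[OF sub xy(1,2)] c_def by simp
    have c0: "c \<noteq> 0" using xy(3) c_def by simp
    have hd: "card {i. c$i \<noteq> 0} = hamming_dist x y"
      unfolding hamming_dist_def c_def by simp
    have "L * card {i. c$i \<noteq> 0} \<le> (L+1)*t"
    proof -
      have "L * card {i. c$i \<noteq> 0} \<le> L*t + L*(t div L)" using hd xy(4)
        by (metis distrib_left mult_le_mono2)
      also have "\<dots> \<le> L*t + t" by simp
      finally show ?thesis by simp
    qed
    then obtain z where z: "L+1 \<le> card {x\<in>C. hamming_dist x z \<le> t}"
      using core[OF cC c0 sub] assms(1,3) by fastforce
    have "card {x\<in>C. real (hamming_dist x z) \<le> r * real CARD('n)} \<le> L"
      using assms(8) unfolding list_decodable_def by blast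
    then show False using z t by simp
  qed
qed

end
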